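(* Let $W=\sum_{j\in[n]}p_j\mathrm B(\varepsilon_j)\in\mathbb B_n$ and $Q=\sum_{i\in[m]}q_i\mathrm B(\sigma_i)\in\mathbb B_m$, where $(p_j)$, $(q_i)$ are probability vectors and $\varepsilon_1,\dots,\varepsilon_n,\sigma_1,\dots,\sigma_m\in[0,1/2]$. Then $W\preccurlyeq Q$ if and only if there is a 1-matrix $(k_{i,j})_{m\times n}$ of pattern $(q_1,\dots,q_m;p_1,\dots,p_n)$ such that $$p_j\varepsilon_j\ \ge\ \sum_{i\in[m]}k_{i,j}\sigma_i\qquad\text{for every } j\in[n].$$
   Context: A binary-input discrete memoryless channel (BIDMC) $W$ has input $x$ uniformly distributed on $\{0,1\}$, a discrete output alphabet and transition probabilities $\Pr(y\mid x)$. Its LR-profile is $P_W(\varepsilon)=\Pr\big(\mathcal L_W(y)=\varepsilon/(1-\varepsilon)\big)$, $\varepsilon\in[0,1]$, where $\mathcal L_W(\hat y)=\Pr(y=\hat y\mid x=0)/\Pr(y=\hat y\mid x=1)$; $W\cong W'$ (equivalent) if their LR-profiles coincide, and all channel identities are up to $\cong$. $W'$ is a degradation of $W$, written $W'\preccurlyeq W$, if there is a channel $R$ from the output alphabet $\mathcal Y$ of $W$ to the output alphabet $\mathcal Y'$ of $W'$ with $\Pr(y'\mid x'=a)=\sum_{y\in\mathcal Y}\Pr(y\mid x=a)R(y'\mid y)$ for $a\in\{0,1\}$. $\mathrm B(\varepsilon)$ is the BSC with crossover probability $\varepsilon$. For BIDMCs $W_1,\dots,W_n$ and nonnegative $q_1,\dots,q_n$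 with sum 1, the random switching channel $\sum_j q_jW_j$ sends, with probability $q_j$ independently of the input, the input through $W_j$ and outputs the output of $W_j$ together with $j$. $\mathbb B_n$ is the set of BIDMCs equivalent to $\sum_{i\in[n]}p_i\mathrm B(\varepsilon_i)$ for some probability vector $(p_i)$ and $\varepsilon_i\in[0,1]$. $[n]=\{1,\dots,n\}$. A 1-matrix of pattern $(q_1,\dots,q_m;p_1,\dots,p_n)$ is a matrix $(k_{i,j})_{m\times n}$ with $k_{i,j}\ge0$, $\sum_{j\in[n]}k_{i,j}=q_i$ ($i\in[m]$) and $\sum_{i\in[m]}k_{i,j}=p_j$ ($j\in[n]$). *)

theory Defs
  imports Complex_Main
begin

text \<open>A binary-input channel with finite output alphabet Y is represented by its
transition probabilities: W y a = Pr(y | x = a), for y in Y and a :: bool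
(False = input 0, True = input 1).\<close>

text \<open>Degradation: degraded W' Y' W Y means W' \<preccurlyeq> W, i.e. there is a channel R
from Y (output of W) to Y' (output of W') with W'(y'|a) = sum_y W(y|a) R(y'|y).\<close>
definition degraded ::
  "('b \<Rightarrow> bool \<Rightarrow> real) \<Rightarrow> 'b set \<Rightarrow> ('a \<Rightarrow> bool \<Rightarrow> real) \<Rightarrow> 'a set \<Rightarrow> bool" where
  "degraded W' Y' W Y \<longleftrightarrow>
     (\<exists>R :: 'a \<Rightarrow> 'b \<Rightarrow> real.
        (\<forall>y\<in>Y. \<forall>y'\<in>Y'. 0 \<le> R y y') \<and>
        (\<forall>y\<in>Y. (\<Sum>y'\<in>Y'. R y y') = 1) \<and>
        (\<forall>a. \<forall>y'\<in>Y'. W' y' a = (\<Sum>y\<in>Y. W y a * R y y')))"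

definition bsc :: "real \<Rightarrow> bool \<Rightarrow> bool \<Rightarrow> real" where
  "bsc e y a = (if y = a then 1 - e else e)"

text \<open>Random switching channel sum_j p_j B(e_j): output (j, y), output alphabet
{1..n} \<times> UNIV.\<close>
definition bsc_switch :: "(nat \<Rightarrow> real) \<Rightarrow> (nat \<Rightarrow> real) \<Rightarrow> nat \<times> bool \<Rightarrow> bool \<Rightarrow> real" where
  "bsc_switch p e = (\<lambda>(j, y) a. p j * bsc (e j) y a)"

definition one_matrix ::
  "nat \<Rightarrow> nat \<Rightarrow> (nat \<Rightarrow> real) \<Rightarrow> (nat \<Rightarrow> real) \<Rightarrow> (nat \<Rightarrow> nat \<Rightarrow> real) \<Rightarrow> bool" where
  "one_matrix m n q p k \<longleftrightarrow>
     (\<forall>i\<in>{1..m}. \<forall>j\<in>{1..n}. 0 \<le> k i j) \<and>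
     (\<forall>i\<in>{1..m}. (\<Sum>j=1..n. k i j) = q i) \<and>
     (\<forall>j\<in>{1..n}. (\<Sum>i=1..m. k i j) = p j)"

end

theory Submission
  imports Defs
begin

lemma sum_bool_prod: "(\<Sum>x\<in>A \<times> (UNIV::bool set). f x) = (\<Sum>i\<in>A. f (i,False) + f (i,True))"
proof -
  have "(\<Sum>x\<in>A \<times> (UNIV::bool set). f x) = (\<Sum>(i,y)\<in>A \<times> (UNIV::bool set). f (i,y))" by simp
  also have "\<dots> = (\<Sum>i\<in>A. \<Sum>y\<in>UNIV. f (i,y))" by (rule sum.cartesian_product[symmetric])
  also have "\<dots> = (\<Sum>i\<in>A. f (i,False) + f (i,True))" by (simp add: UNIV_bool add.commute)
  finally show ?thesis .
qed

lemma fwd: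
  fixes n m :: nat and p e q s :: "nat \<Rightarrow> real"
  assumes "\<forall>i\<in>{1..m}. 0 \<le> q i"
      and "\<forall>i\<in>{1..m}. 0 \<le> s i \<and> s i \<le> 1/2"
      and deg: "degraded (bsc_switch p e) ({1..n} \<times> UNIV) (bsc_switch q s) ({1..m} \<times> UNIV)"
  shows "\<exists>k. one_matrix m n q p k \<and>
                  (\<forall>j\<in>{1..n}. p j * e j \<ge> (\<Sum>i=1..m. k i j * s i))"
proof -
  obtain R :: "nat \<times> bool \<Rightarrow> nat \<times> bool \<Rightarrow> real" where
    R0: "\<forall>y\<in>{1..m} \<times> UNIV. \<forall>y'\<in>{1..n} \<times> UNIV. 0 \<le> R y y'" and
    R1: "\<forall>y\<in>{1..m} \<times> UNIV. (\<Sum>y'\<in>{1..n} \<times> UNIV. R y y') = 1" and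
    R2: "\<forall>a. \<forall>y'\<in>{1..n} \<times> UNIV. bsc_switch p e y' a = (\<Sum>y\<in>{1..m} \<times> UNIV. bsc_switch q s y a * R y y')"
    using deg unfolding degraded_def by blast
  have E: "p j * bsc (e j) y' a = (\<Sum>i=1..m. q i * bsc (s i) False a * R (i,False) (j,y')
             + q i * bsc (s i) True a * R (i,True) (j,y'))" if "j \<in> {1..n}" for j y' a
    using R2 that by (simp add: sum_bool_prod bsc_switch_def)
  define k where "k i j = q i / 2 * (R (i,False) (j,False) + R (i,False) (j,True)
      + R (i,True) (j,False) + R (i,True) (j,True))" for i j
  have "one_matrix m n q p k"
    unfolding one_matrix_def
  proof (intro conjI ballI)
    fix i j assume i: "i \<in> {1..m}" and j: "j \<in> {1..n}"
    show "0 \<le> k i j" unfolding k_def using R0 i j assms(1) by simp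
  next
    fix i assume i: "i \<in> {1..m}"
    have a: "(\<Sum>j=1..n. R (i,False) (j,False) + R (i,False) (j,True)) = 1"
      using R1 i by (simp add: sum_bool_prod)
    have b: "(\<Sum>j=1..n. R (i,True) (j,False) + R (i,True) (j,True)) = 1"
      using R1 i by (simp add: sum_bool_prod)
    have "(\<Sum>j=1..n. k i j) = q i / 2 * ((\<Sum>j=1..n. R (i,False) (j,False) + R (i,False) (j,True))
           + (\<Sum>j=1..n. R (i,True) (j,False) + R (i,True) (j,True)))"
      unfolding k_def by (simp add: sum_distrib_left sum.distrib[symmetric] algebra_simps)
    then show "(\<Sum>j=1..n. k i j) = q i" using a b by simp
  next
    fix j assume j: "j \<in> {1..n}"
    have "p j * 2 = p j * bsc (e j) False False + p j * bsc (e j) False True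
        + p j * bsc (e j) True False + p j * bsc (e j) True True"
      by (simp add: bsc_def algebra_simps)
    also have "\<dots> = (\<Sum>i=1..m. k i j) * 2"
      unfolding E[OF j] k_def sum.distrib[symmetric] sum_distrib_right
      by (rule sum.cong) (auto simp: bsc_def algebra_simps)
    finally show "(\<Sum>i=1..m. k i j) = p j" by simp
  qed
  moreover have "\<forall>j\<in>{1..n}. p j * e j \<ge> (\<Sum>i=1..m. k i j * s i)"
  proof
    fix j assume j: "j \<in> {1..n}"
    have "(\<Sum>i=1..m. k i j * s i) * 2 \<le> p j * bsc (e j) True False + p j * bsc (e j) False True"
      unfolding E[OF j] sum.distrib[symmetric] sum_distrib_right
    proof (rule sum_mono)
      fix i assume i: "i \<in> {1..m}"
      have "0 \<le> q i * (1 - 2 * s i) * (R (i,False) (j,True) + R (i,True) (j,False))"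
        using i j R0 assms(1,2) by (intro mult_nonneg_nonneg) (auto simp del: One_nat_def, force)
      then show "k i j * s i * 2 \<le> q i * bsc (s i) False False * R (i, False) (j, True) +
          q i * bsc (s i) True False * R (i, True) (j, True) +
          (q i * bsc (s i) False True * R (i, False) (j, False) +
           q i * bsc (s i) True True * R (i, True) (j, False))"
        unfolding k_def bsc_def by (simp add: algebra_simps)
    qed
    also have "\<dots> = p j * e j * 2" by (simp add: bsc_def)
    finally show "p j * e j \<ge> (\<Sum>i=1..m. k i j * s i)" by simp
  qed
  ultimately show ?thesis by blast
qed

lemma bwd:
  fixes n m :: nat and p e q s :: "nat \<Rightarrow> real"
  assumes n1: "1 \<le> n"
      and q0: "\<forall>i\<in>{1..m}. 0 \<le> q i"
      and ej: "\<forall>j\<in>{1..n}. 0 \<le> e j \<and> e j \<le> 1/2"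
      and si: "\<forall>i\<in>{1..m}. 0 \<le> s i \<and> s i \<le> 1/2"
      and om: "one_matrix m n q p k"
      and ineq: "\<forall>j\<in>{1..n}. p j * e j \<ge> (\<Sum>i=1..m. k i j * s i)"
  shows "degraded (bsc_switch p e) ({1..n} \<times> UNIV) (bsc_switch q s) ({1..m} \<times> UNIV)"
proof -
  have k0: "\<And>i j. i \<in> {1..m} \<Longrightarrow> j \<in> {1..n} \<Longrightarrow> 0 \<le> k i j"
   and kr: "\<And>i. i \<in> {1..m} \<Longrightarrow> (\<Sum>j=1..n. k i j) = q i"
   and kc: "\<And>j. j \<in> {1..n} \<Longrightarrow> (\<Sum>i=1..m. k i j) = p j"
    using om unfolding one_matrix_def by auto
  have kz: "k i j = 0" if "i \<in> {1..m}" "j \<in> {1..n}" "q i = 0" for i j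
  proof -
    have "(\<Sum>j=1..n. k i j) = 0" using kr that by simp
    then have "\<forall>j\<in>{1..n}. k i j = 0" using k0 that(1) by (subst (asm) sum_nonneg_eq_0_iff) auto
    then show ?thesis using that by auto
  qed
  define S where "S j = (\<Sum>i=1..m. k i j * s i)" for j
  define D where "D j = p j / 2 - S j" for j
  define N where "N j = p j * e j - S j" for j
  define lam where "lam j = (if D j = 0 then 0 else N j / D j)" for j
  have ND: "0 \<le> N j \<and> N j \<le> D j" if j: "j \<in> {1..n}" for j
  proof -
    have "p j * e j \<le> p j / 2"
    proof -
      have "0 \<le> p j" using kc[OF j] k0 j by (metis sum_nonneg)
      moreover have "e j \<le> 1/2" using ej j by blast
      ultimately have "p j * e j \<le> p j * (1/2)" by (metis mult_left_mono)
      then show ?thesis by simp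
    qed
    then show ?thesis using ineq j unfolding N_def D_def S_def by auto
  qed
  have lam01: "0 \<le> lam j \<and> lam j \<le> 1" if "j \<in> {1..n}" for j
    using ND[OF that] unfolding lam_def by (auto simp: divide_le_eq_1 intro: divide_nonneg_nonneg)
  have lamN: "lam j * D j = N j" if "j \<in> {1..n}" for j
    using ND[OF that] unfolding lam_def by auto
  define fl where "fl j y y' = (if y = y' then 1 - lam j / 2 else lam j / 2)" for j and y y' :: bool
  define R where "R = (\<lambda>(i::nat,y::bool) (j::nat,y'::bool). if q i = 0 then (if j = 1 then 1/2 else 0)
        else k i j / q i * fl j y y')"
  show ?thesis unfolding degraded_def
  proof (intro exI[of _ R] conjI ballI allI)
    fix y y' assume y: "y \<in> {1..m} \<times> (UNIV::bool set)" and y': "y' \<in> {1..n} \<times> (UNIV::bool set)"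
    obtain i b j b' where yy: "y = (i,b)" "y' = (j,b')" and i: "i \<in> {1..m}" and j: "j \<in> {1..n}"
      using y y' by auto
    have "0 \<le> fl j b b'" using lam01[OF j] unfolding fl_def by auto
    moreover have "0 \<le> k i j / q i" using k0[OF i j] q0 i by simp
    ultimately have "0 \<le> k i j / q i * fl j b b'" by (metis mult_nonneg_nonneg)
    then show "0 \<le> R y y'" unfolding R_def yy by (simp del: times_divide_eq_left)
  next
    fix y assume y: "y \<in> {1..m} \<times> (UNIV::bool set)"
    obtain i b where yy: "y = (i,b)" and i: "i \<in> {1..m}" using y by auto
    show "(\<Sum>y'\<in>{1..n} \<times> UNIV. R y y') = 1"
    proof (cases "q i = 0")
      case True
      have "(\<Sum>y'\<in>{1..n} \<times> UNIV. R y y') = (\<Sum>j=1..n. if j = 1 then 1 else 0)"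
        unfolding sum_bool_prod yy R_def using True by (intro sum.cong) auto
      also have "\<dots> = 1" using n1 by simp
      finally show ?thesis .
    next
      case False
      have "(\<Sum>y'\<in>{1..n} \<times> UNIV. R y y') = (\<Sum>j=1..n. k i j / q i)"
        unfolding sum_bool_prod yy R_def using False by (intro sum.cong) (auto simp: fl_def field_simps)
      also have "\<dots> = 1" using kr[OF i] False by (simp add: sum_divide_distrib[symmetric])
      finally show ?thesis .
    qed
  next
    fix a and y' assume y': "y' \<in> {1..n} \<times> (UNIV::bool set)"
    obtain j b where yy: "y' = (j,b)" and j: "j \<in> {1..n}" using y' by auto
    define t where "t i = s i * (1 - lam j) + lam j / 2" for i
    have "(\<Sum>y\<in>{1..m} \<times> UNIV. bsc_switch q s y a * R y y') =
          (\<Sum>i=1..m. k i j * (if b = a then 1 - t i else t i))"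
      unfolding sum_bool_prod yy
    proof (intro sum.cong refl)
      fix i assume i: "i \<in> {1..m}"
      show "bsc_switch q s (i, False) a * R (i, False) (j, b) + bsc_switch q s (i, True) a * R (i, True) (j, b) =
         k i j * (if b = a then 1 - t i else t i)"
      proof (cases "q i = 0")
        case True then show ?thesis using kz[OF i j] by (simp add: bsc_switch_def)
      next
        case False then show ?thesis unfolding bsc_switch_def R_def fl_def t_def bsc_def
          by (cases a; cases b) (auto simp: field_simps)
      qed
    qed
    also have "\<dots> = bsc_switch p e y' a"
    proof -
      have tt: "(\<Sum>i=1..m. k i j * t i) = p j * e j"
      proof -
        have "(\<Sum>i=1..m. k i j * t i) = (\<Sum>i=1..m. (k i j * s i) * (1 - lam j) + lam j / 2 * k i j)"
          by (intro sum.cong) (auto simp: t_def algebra_simps)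
        also have "\<dots> = S j * (1 - lam j) + lam j / 2 * (\<Sum>i=1..m. k i j)"
          unfolding S_def by (simp add: sum_distrib_left sum_distrib_right sum.distrib)
        also have "\<dots> = S j + lam j * D j" using kc[OF j] unfolding D_def by (simp add: algebra_simps)
        also have "\<dots> = p j * e j" using lamN[OF j] unfolding N_def by simp
        finally show ?thesis .
      qed
      show ?thesis
      proof (cases "b = a")
        case True
        have "(\<Sum>i=1..m. k i j * (if b = a then 1 - t i else t i)) = (\<Sum>i=1..m. k i j) - (\<Sum>i=1..m. k i j * t i)"
          using True by (simp add: sum_subtractf[symmetric] algebra_simps)
        then show ?thesis using tt kc[OF j] True yy by (simp add: bsc_switch_def bsc_def algebra_simps)
      next
        case False
        then show ?thesis using tt yy by (simp add: bsc_switch_def bsc_def)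
      qed
    qed
    finally show "bsc_switch p e y' a = (\<Sum>y\<in>{1..m} \<times> UNIV. bsc_switch q s y a * R y y')" by simp
  qed
qed

theorem theorem1:
  fixes n m :: nat and p e q s :: "nat \<Rightarrow> real"
  assumes "\<forall>j\<in>{1..n}. 0 \<le> p j" and "(\<Sum>j=1..n. p j) = 1"
      and "\<forall>i\<in>{1..m}. 0 \<le> q i" and "(\<Sum>i=1..m. q i) = 1"
      and "\<forall>j\<in>{1..n}. 0 \<le> e j \<and> e j \<le> 1/2"
      and "\<forall>i\<in>{1..m}. 0 \<le> s i \<and> s i \<le> 1/2"
  shows "degraded (bsc_switch p e) ({1..n} \<times> UNIV) (bsc_switch q s) ({1..m} \<times> UNIV)
         \<longleftrightarrow> (\<exists>k. one_matrix m n q p k \<and>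
                  (\<forall>j\<in>{1..n}. p j * e j \<ge> (\<Sum>i=1..m. k i j * s i)))"
proof
  assume "degraded (bsc_switch p e) ({1..n} \<times> UNIV) (bsc_switch q s) ({1..m} \<times> UNIV)"
  then show "\<exists>k. one_matrix m n q p k \<and> (\<forall>j\<in>{1..n}. p j * e j \<ge> (\<Sum>i=1..m. k i j * s i))"
    using fwd assms by blast
next
  have "1 \<le> n" using assms(2) by (cases n) auto
  moreover assume "\<exists>k. one_matrix m n q p k \<and> (\<forall>j\<in>{1..n}. p j * e j \<ge> (\<Sum>i=1..m. k i j * s i))"
  ultimately show "degraded (bsc_switch p e) ({1..n} \<times> UNIV) (bsc_switch q s) ({1..m} \<times> UNIV)"
    using bwd assms by blast
qed

end
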